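(* \[ \sum_{n=1}^{\infty}\frac{ne^{n\pi}}{e^{2\pi n}-1}+\sum_{n=1}^{\infty}\frac{n(-1)^n}{e^{2\pi n}-1}=\frac{1}{8}-\frac{1}{4\pi}. \] *)

theory Defs
  imports Complex_Main
begin

end

theory Submission
  imports Defs "HOL-Analysis.Analysis" "HOL-Real_Asymp.Real_Asymp"
begin


lemma digamma_reflection:
  fixes z :: complex
  assumes z: "z \<notin> \<int>"
  shows "Digamma z - Digamma (1 - z) = - of_real pi * cot (of_real pi * z)"
proof -
  have z1: "z \<notin> \<int>\<^sub>\<le>\<^sub>0" using z nonpos_Ints_subset_Ints by blast
  have z2: "1 - z \<notin> \<int>\<^sub>\<le>\<^sub>0"
  proof
    assume "1 - z \<in> \<int>\<^sub>\<le>\<^sub>0"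
    then have "1 - z \<in> \<int>" using nonpos_Ints_subset_Ints by blast
    then have "1 - (1 - z) \<in> \<int>" by (intro Ints_diff) auto
    with z show False by simp
  qed
  have sinz: "sin (of_real pi * z) \<noteq> 0"
    using z by (auto simp: sin_eq_0 Ints_def)
  have G0: "Gamma z \<noteq> 0" "Gamma (1 - z) \<noteq> 0" using z1 z2 by (auto simp: Gamma_eq_zero_iff)
  have d1: "((\<lambda>w. Gamma w * Gamma (1 - w)) has_field_derivative
       (Gamma z * Digamma z * Gamma (1 - z) + Gamma z * (Gamma (1 - z) * Digamma (1 - z) * (-1)))) (at z)"
    using z1 z2 by (auto intro!: derivative_eq_intros)
  have d2: "((\<lambda>w. of_real pi / sin (of_real pi * w)) has_field_derivative
       (- (of_real pi * (cos (of_real pi * z) * of_real pi)) / (sin (of_real pi * z))^2)) (at z)"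
    using sinz by (auto intro!: derivative_eq_intros simp: power2_eq_square)
  have eqf: "(\<lambda>w::complex. Gamma w * Gamma (1 - w)) = (\<lambda>w. of_real pi / sin (of_real pi * w))"
    by (rule ext, rule Gamma_reflection_complex)
  from d1 d2 have "Gamma z * Digamma z * Gamma (1 - z) + Gamma z * (Gamma (1 - z) * Digamma (1 - z) * (-1))
      = (- (of_real pi * (cos (of_real pi * z) * of_real pi)) / (sin (of_real pi * z))^2)"
    unfolding eqf by (rule DERIV_unique)
  then have "Gamma z * Gamma (1 - z) * (Digamma z - Digamma (1 - z))
      = (of_real pi / sin (of_real pi * z)) * (- of_real pi * cot (of_real pi * z))"
    by (simp add: cot_def field_simps power2_eq_square)
  moreover have GG: "Gamma z * Gamma (1 - z) = of_real pi / sin (of_real pi * z)"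
    by (rule Gamma_reflection_complex)
  moreover have "Gamma z * Gamma (1 - z) \<noteq> 0" using G0 by simp
  ultimately show ?thesis by (metis mult_left_cancel)
qed

lemma aux_alg: "- (p::complex) * (((- (s * s)) - c * c) * p / (s * s)) = p * p * (s * s + c * c) / (s * s)"
  by (simp add: divide_inverse algebra_simps)

lemma trigamma_reflection:
  fixes z :: complex
  assumes z: "z \<notin> \<int>"
  shows "Polygamma 1 z + Polygamma 1 (1 - z) = of_real pi ^ 2 / (sin (of_real pi * z))^2"
proof -
  define U where "U = - (\<int> :: complex set)"
  have U: "open U" "z \<in> U" using z by (auto simp: U_def)
  have nz: "w \<notin> \<int>\<^sub>\<le>\<^sub>0" "1 - w \<notin> \<int>\<^sub>\<le>\<^sub>0" "sin (of_real pi * w) \<noteq> 0" if "w \<in> U" for w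
  proof -
    have w: "w \<notin> \<int>" using that by (simp add: U_def)
    show "w \<notin> \<int>\<^sub>\<le>\<^sub>0" using w nonpos_Ints_subset_Ints by blast
    show "1 - w \<notin> \<int>\<^sub>\<le>\<^sub>0"
    proof
      assume "1 - w \<in> \<int>\<^sub>\<le>\<^sub>0"
      then have "1 - w \<in> \<int>" using nonpos_Ints_subset_Ints by blast
      then have "1 - (1 - w) \<in> \<int>" by (intro Ints_diff) auto
      with w show False by simp
    qed
    show "sin (of_real pi * w) \<noteq> 0"
      using w by (auto simp: sin_eq_0 Ints_def)
  qed
  have d1: "((\<lambda>w. Digamma w - Digamma (1 - w)) has_field_derivative
       (Polygamma 1 z - Polygamma 1 (1 - z) * (-1))) (at z)"
    using nz[OF U(2)] by (auto intro!: derivative_eq_intros)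
  have d2: "((\<lambda>w. - of_real pi * cot (of_real pi * w)) has_field_derivative
       (- of_real pi * ((- (sin (of_real pi * z) * sin (of_real pi * z)) - cos (of_real pi * z) * cos (of_real pi * z)) * of_real pi / (sin (of_real pi * z) * sin (of_real pi * z))))) (at z)"
    unfolding cot_def using nz(3)[OF U(2)]
    by (auto intro!: derivative_eq_intros simp: power2_eq_square field_simps)
  have d1': "((\<lambda>w. - of_real pi * cot (of_real pi * w)) has_field_derivative
       (Polygamma 1 z - Polygamma 1 (1 - z) * (-1))) (at z)"
    by (rule has_field_derivative_transform_within_open[OF d1 U]) (simp add: U_def digamma_reflection)
  have "Polygamma 1 z - Polygamma 1 (1 - z) * (-1) = 
     (- of_real pi * ((- (sin (of_real pi * z) * sin (of_real pi * z)) - cos (of_real pi * z) * cos (of_real pi * z)) * of_real pi / (sin (of_real pi * z) * sin (of_real pi * z))))"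
    using d1' d2 by (rule DERIV_unique)
  also have "\<dots> = of_real pi ^ 2 / (sin (of_real pi * z))^2"
  proof -
    have sc: "sin (of_real pi * z) * sin (of_real pi * z) + cos (of_real pi * z) * cos (of_real pi * z) = 1"
      using sin_cos_squared_add[of "of_real pi * z"] by (simp add: power2_eq_square)
    have "- of_real pi * ((- (sin (of_real pi * z) * sin (of_real pi * z)) - cos (of_real pi * z) * cos (of_real pi * z)) * of_real pi / (sin (of_real pi * z) * sin (of_real pi * z)))
       = of_real pi * of_real pi * (sin (of_real pi * z) * sin (of_real pi * z) + cos (of_real pi * z) * cos (of_real pi * z)) / (sin (of_real pi * z) * sin (of_real pi * z))"
      by (rule aux_alg)
    also have "\<dots> = of_real pi ^ 2 / (sin (of_real pi * z))^2" unfolding sc by (simp add: power2_eq_square)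
    finally show ?thesis .
  qed
  finally show ?thesis by simp
qed



lemma aux_div_i: "(y::real) \<noteq> 0 \<Longrightarrow> complex_of_real x / (complex_of_real y / \<i>) = \<i> * complex_of_real (x / y)"
  by (simp add: field_simps)

lemma cot_i_pi:
  fixes a :: real
  assumes "a > 0"
  shows "- of_real pi * cot (of_real pi * (\<i> * of_real a)) =
     \<i> * of_real (pi * (exp (pi*a) + exp (-(pi*a))) / (exp (pi*a) - exp (-(pi*a))))"
proof -
  have e: "exp (pi*a) \<noteq> exp (-(pi*a))" using assms by simp
  have c: "cos (of_real pi * (\<i> * of_real a)) = of_real ((exp (pi*a) + exp (-(pi*a)))/2)"
    by (simp add: cos_exp_eq exp_of_real[symmetric] mult.commute mult.left_commute add.commute)
  have s: "sin (of_real pi * (\<i> * of_real a)) = of_real ((exp (-(pi*a)) - exp (pi*a))/2) / \<i>"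
    by (simp add: sin_exp_eq exp_of_real[symmetric] mult.commute mult.left_commute divide_simps) (simp add: algebra_simps flip: mult.assoc)
  have ne: "(exp (-(pi*a)) - exp (pi*a))/2 \<noteq> 0" using e by simp
  have "cot (of_real pi * (\<i> * of_real a)) = \<i> * complex_of_real (((exp (pi*a) + exp (-(pi*a)))/2) / ((exp (-(pi*a)) - exp (pi*a))/2))"
    unfolding cot_def c s by (rule aux_div_i[OF ne])
  also have "((exp (pi*a) + exp (-(pi*a)))/2) / ((exp (-(pi*a)) - exp (pi*a))/2) = 
      - ((exp (pi*a) + exp (-(pi*a))) / (exp (pi*a) - exp (-(pi*a))))"
    using e by (simp add: field_simps)
  finally show ?thesis by simp
qed



lemma i_not_int: "a \<noteq> 0 \<Longrightarrow> \<i> * complex_of_real a \<notin> \<int>"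
  by (auto simp: complex_is_Int_iff)

lemma coth_series:
  fixes a :: real
  assumes a: "a > 0"
  shows "(\<lambda>k. a / ((real k)^2 + a^2) + a / ((real k + 1)^2 + a^2)) sums
           (pi * (exp (pi*a) + exp (-(pi*a))) / (exp (pi*a) - exp (-(pi*a))))"
proof -
  define z where "z = \<i> * complex_of_real a"
  have z: "z \<notin> \<int>" "z \<noteq> 0" "1 - z \<noteq> 0" using a i_not_int[of a]
    by (auto simp: z_def complex_eq_iff)
  have s1: "(\<lambda>k. inverse (of_nat (Suc k)) - inverse (z + of_nat k)) sums (Digamma z + euler_mascheroni)"
    using summable_Digamma[OF z(2)] by (simp add: Digamma_def summable_sums)
  have s2: "(\<lambda>k. inverse (of_nat (Suc k)) - inverse ((1 - z) + of_nat k)) sums (Digamma (1 - z) + euler_mascheroni)"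
    using summable_Digamma[OF z(3)] by (simp add: Digamma_def summable_sums)
  have "(\<lambda>k. inverse ((1 - z) + of_nat k) - inverse (z + of_nat k)) sums (Digamma z - Digamma (1 - z))"
    using sums_diff[OF s1 s2] by simp
  also have "Digamma z - Digamma (1 - z) = \<i> * of_real (pi * (exp (pi*a) + exp (-(pi*a))) / (exp (pi*a) - exp (-(pi*a))))"
    using digamma_reflection[OF z(1)] cot_i_pi[OF a] by (simp add: z_def)
  finally have "(\<lambda>k. Im (inverse ((1 - z) + of_nat k) - inverse (z + of_nat k))) sums
      (pi * (exp (pi*a) + exp (-(pi*a))) / (exp (pi*a) - exp (-(pi*a))))"
    by (auto dest: sums_Im)
  also have "(\<lambda>k. Im (inverse ((1 - z) + of_nat k) - inverse (z + of_nat k))) =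
     (\<lambda>k. a / ((real k)^2 + a^2) + a / ((real k + 1)^2 + a^2))"
  proof
    fix k
    show "Im (inverse ((1 - z) + of_nat k) - inverse (z + of_nat k)) = a / ((real k)^2 + a^2) + a / ((real k + 1)^2 + a^2)"
      by (simp add: z_def Im_inverse power2_eq_square algebra_simps add_divide_distrib)
  qed
  finally show ?thesis .
qed



lemma Re_inv_sq: "Re (inverse ((complex_of_real x + \<i> * complex_of_real y)^2)) = (x^2 - y^2) / (x^2 + y^2)^2"
proof -
  have "(complex_of_real x + \<i> * complex_of_real y)^2 = Complex (x^2 - y^2) (2*x*y)"
    by (simp add: complex_eq_iff power2_eq_square algebra_simps)
  moreover have "(x^2 - y^2)^2 + (2*x*y)^2 = (x^2 + y^2)^2"
    by (simp add: power2_eq_square algebra_simps)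
  ultimately show ?thesis by (simp add: Re_inverse)
qed

lemma csch2_series:
  fixes a :: real
  assumes a: "a > 0"
  shows "(\<lambda>k. ((real k)^2 - a^2) / ((real k)^2 + a^2)^2 + ((real k + 1)^2 - a^2) / ((real k + 1)^2 + a^2)^2) sums
           (- (4 * pi^2 / (exp (pi*a) - exp (-(pi*a)))^2))"
proof -
  define z where "z = \<i> * complex_of_real a"
  have z: "z \<notin> \<int>" "z \<noteq> 0" "1 - z \<noteq> 0" using a i_not_int[of a]
    by (auto simp: z_def complex_eq_iff)
  have s1: "(\<lambda>k. inverse ((z + of_nat k)^2)) sums Polygamma 1 z"
    using Polygamma_LIMSEQ[OF z(2), of 1] by (simp add: power2_eq_square)
  have s2: "(\<lambda>k. inverse (((1 - z) + of_nat k)^2)) sums Polygamma 1 (1 - z)"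
    using Polygamma_LIMSEQ[OF z(3), of 1] by (simp add: power2_eq_square)
  have e: "exp (pi*a) \<noteq> exp (-(pi*a))" using assms by simp
  have s: "sin (of_real pi * z) = of_real ((exp (-(pi*a)) - exp (pi*a))/2) / \<i>"
    unfolding z_def
    by (simp add: sin_exp_eq exp_of_real[symmetric] mult.commute mult.left_commute divide_simps) (simp add: algebra_simps flip: mult.assoc)
  have sq: "(sin (of_real pi * z))^2 = - of_real (((exp (-(pi*a)) - exp (pi*a))/2)^2)"
    unfolding s by (simp add: power2_eq_square field_simps)
  have "of_real pi ^ 2 / (sin (of_real pi * z))^2 = complex_of_real (- (pi^2 / ((exp (-(pi*a)) - exp (pi*a))/2)^2))"
    unfolding sq by simp
  also have "- (pi^2 / ((exp (-(pi*a)) - exp (pi*a))/2)^2) = - (4 * pi^2 / (exp (pi*a) - exp (-(pi*a)))^2)"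
    by (simp add: power2_commute[of "exp (-(pi*a))"] power_divide)
  finally have "of_real pi ^ 2 / (sin (of_real pi * z))^2 = complex_of_real (- (4 * pi^2 / (exp (pi*a) - exp (-(pi*a)))^2))" .
  then have "(\<lambda>k. inverse ((z + of_nat k)^2) + inverse (((1 - z) + of_nat k)^2)) sums complex_of_real (- (4 * pi^2 / (exp (pi*a) - exp (-(pi*a)))^2))"
    using sums_add[OF s1 s2] trigamma_reflection[OF z(1)] by simp
  then have "(\<lambda>k. Re (inverse ((z + of_nat k)^2) + inverse (((1 - z) + of_nat k)^2))) sums (- (4 * pi^2 / (exp (pi*a) - exp (-(pi*a)))^2))"
    by (auto dest: sums_Re)
  also have "(\<lambda>k. Re (inverse ((z + of_nat k)^2) + inverse (((1 - z) + of_nat k)^2))) = 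
      (\<lambda>k. ((real k)^2 - a^2) / ((real k)^2 + a^2)^2 + ((real k + 1)^2 - a^2) / ((real k + 1)^2 + a^2)^2)"
  proof
    fix k
    have 1: "z + of_nat k = complex_of_real (real k) + \<i> * complex_of_real a" by (simp add: z_def)
    have 2: "(1 - z) + of_nat k = complex_of_real (real k + 1) + \<i> * complex_of_real (-a)" by (simp add: z_def)
    show "Re (inverse ((z + of_nat k)^2) + inverse (((1 - z) + of_nat k)^2)) = ((real k)^2 - a^2) / ((real k)^2 + a^2)^2 + ((real k + 1)^2 - a^2) / ((real k + 1)^2 + a^2)^2"
      unfolding 1 2 by (simp only: Re_inv_sq plus_complex.sel) simp
  qed
  finally show ?thesis .
qed



definition cth :: "real \<Rightarrow> real" where "cth u = (exp u + exp (-u)) / (exp u - exp (-u))"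
definition csch2 :: "real \<Rightarrow> real" where "csch2 u = 4 / (exp u - exp (-u))^2"

lemma pair_sums:
  fixes g :: "nat \<Rightarrow> real"
  assumes "summable g" "(\<lambda>k. g k + g (Suc k)) sums s"
  shows "g sums ((s + g 0) / 2)"
proof -
  have 1: "g sums suminf g" using assms(1) by (simp add: summable_sums)
  have 2: "(\<lambda>k. g (Suc k)) sums (suminf g - g 0)" using 1 by (simp add: sums_Suc_iff)
  have "(\<lambda>k. g k + g (Suc k)) sums (suminf g + (suminf g - g 0))" by (rule sums_add[OF 1 2])
  then have "s = 2 * suminf g - g 0" using assms(2) sums_unique2 by fastforce
  then have eq: "suminf g = (s + g 0) / 2" by simp
  show ?thesis using 1 by (simp only: eq[symmetric])
qed

lemma S1:
  fixes a :: real
  assumes a: "a > 0"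
  shows "(\<lambda>k. a / ((real k)^2 + a^2)) sums ((pi * cth (pi * a) + 1 / a) / 2)"
proof -
  define g where "g k = a / ((real k)^2 + a^2)" for k :: nat
  have eq: "(\<lambda>k. a / ((real k)^2 + a^2) + a / ((real k + 1)^2 + a^2)) = (\<lambda>k. g k + g (Suc k))"
    by (auto simp: g_def add.commute)
  have s: "(\<lambda>k. g k + g (Suc k)) sums (pi * cth (pi * a))"
    using coth_series[OF a] unfolding eq cth_def by simp
  have "summable g"
  proof (rule summable_comparison_test'[OF sums_summable[OF s]])
    fix n :: nat
    show "norm (g n) \<le> g n + g (Suc n)"
      using a by (simp add: add_pos_pos g_def)
  qed
  from pair_sums[OF this s] show ?thesis using a by (simp add: power2_eq_square g_def)
qed

lemma S1':
  fixes a :: real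
  assumes a: "a > 0"
  shows "(\<lambda>k. 1 / ((real k)^2 + a^2)) sums ((pi * cth (pi * a) + 1 / a) / (2 * a))"
proof -
  have A: "(\<lambda>k. (1/a) * (a / ((real k)^2 + a^2))) sums ((1/a) * ((pi * cth (pi * a) + 1 / a) / 2))"
    by (rule sums_mult[OF S1[OF a]])
  have L: "(\<lambda>k. (1/a) * (a / ((real k)^2 + a^2))) = (\<lambda>k. 1 / ((real k)^2 + a^2))"
    using a by auto
  have V: "(1/a) * ((pi * cth (pi * a) + 1 / a) / 2) = (pi * cth (pi * a) + 1 / a) / (2 * a)"
    by simp
  show ?thesis using A unfolding L V .
qed

lemma S2:
  fixes a :: real
  assumes a: "a > 0"
  shows "(\<lambda>k. ((real k)^2 - a^2) / ((real k)^2 + a^2)^2) sums ((- (pi^2 * csch2 (pi * a)) - 1 / a^2) / 2)"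
proof -
  define g where "g k = ((real k)^2 - a^2) / ((real k)^2 + a^2)^2" for k :: nat
  have eq: "(\<lambda>k. ((real k)^2 - a^2) / ((real k)^2 + a^2)^2 + ((real k + 1)^2 - a^2) / ((real k + 1)^2 + a^2)^2) = (\<lambda>k. g k + g (Suc k))"
    by (auto simp: g_def add.commute)
  have v: "- (4 * pi^2 / (exp (pi*a) - exp (-(pi*a)))^2) = - (pi^2 * csch2 (pi * a))"
    by (simp add: csch2_def)
  have s: "(\<lambda>k. g k + g (Suc k)) sums (- (pi^2 * csch2 (pi * a)))"
    using csch2_series[OF a] unfolding eq v .
  have "summable g"
  proof (rule summable_comparison_test'[OF sums_summable[OF S1'[OF a]]])
    fix n :: nat
    have p: "(real n)^2 + a^2 > 0" using a by (simp add: add_nonneg_pos)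
    have "\<bar>(real n)^2 - a^2\<bar> \<le> (real n)^2 + a^2" by (auto simp: abs_le_iff)
    then have "\<bar>(real n)^2 - a^2\<bar> / ((real n)^2 + a^2)^2 \<le> ((real n)^2 + a^2) / ((real n)^2 + a^2)^2"
      by (intro divide_right_mono) auto
    also have "\<dots> = 1 / ((real n)^2 + a^2)" using p by (simp add: power2_eq_square)
    finally show "norm (g n) \<le> 1 / ((real n)^2 + a^2)"
      by (simp add: abs_div g_def)
  qed
  from pair_sums[OF this s] show ?thesis using a by (simp add: power2_eq_square g_def)
qed



definition FF :: "real \<Rightarrow> nat \<Rightarrow> nat \<Rightarrow> real" where
  "FF t n m = ((real n)^2 - (real m * t)^2) / ((real n)^2 + (real m * t)^2)^2"
definition PH :: "real \<Rightarrow> nat \<Rightarrow> nat \<Rightarrow> real" where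
  "PH t n m = real n / ((real n)^2 + (real m * t)^2)"
definition EE :: "real \<Rightarrow> nat \<Rightarrow> nat \<Rightarrow> real" where
  "EE t n m = FF t n m - PH t n m + PH t (Suc n) m"
definition BB :: "real \<Rightarrow> nat \<Rightarrow> nat \<Rightarrow> real" where
  "BB t n m = (if m = 0 then 4 / (real n + 1)^2 else 1 / (((real n)^2 + (real m * t)^2) * (real m * t)))"

lemma inv_identity:
  fixes w :: complex
  assumes "w \<noteq> 0" "w + 1 \<noteq> 0"
  shows "inverse (w^2) - inverse w + inverse (w + 1) = inverse (w^2 * (w + 1))"
  using assms by (simp add: field_simps power2_eq_square)

lemma EE_bound_pos:
  assumes t: "t > 0" and m: "m > 0"
  shows "\<bar>EE t n m\<bar> \<le> BB t n m"
proof -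
  define y where "y = real m * t"
  have y: "y > 0" using t m by (simp add: y_def)
  define w where "w = complex_of_real (real n) + \<i> * complex_of_real y"
  have w1: "w + 1 = complex_of_real (real n + 1) + \<i> * complex_of_real y" by (simp add: w_def)
  have wnz: "w \<noteq> 0" "w + 1 \<noteq> 0" using y by (auto simp: w_def complex_eq_iff)
  have ReF: "Re (inverse (w^2)) = FF t n m"
    unfolding w_def FF_def Re_inv_sq y_def ..
  have ReP: "Re (inverse w) = PH t n m"
    by (simp add: w_def PH_def Re_inverse y_def power2_eq_square)
  have ReP1: "Re (inverse (w + 1)) = PH t (Suc n) m"
    by (simp add: w_def PH_def Re_inverse y_def power2_eq_square add.commute)
  have "EE t n m = Re (inverse (w^2 * (w + 1)))"
    unfolding EE_def inv_identity[OF wnz, symmetric] using ReF ReP ReP1 by simp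
  also have "\<dots> \<le> \<bar>Re (inverse (w^2 * (w + 1)))\<bar>" by simp
  finally have "\<bar>EE t n m\<bar> \<le> cmod (inverse (w^2 * (w + 1)))"
    using abs_Re_le_cmod by (metis \<open>EE t n m = Re (inverse (w\<^sup>2 * (w + 1)))\<close>)
  also have "cmod (inverse (w^2 * (w + 1))) = 1 / ((cmod w)^2 * cmod (w + 1))"
    by (simp add: norm_inverse norm_mult norm_power divide_inverse)
  also have "(cmod w)^2 = (real n)^2 + y^2"
    by (simp add: w_def cmod_power2)
  also have "1 / (((real n)^2 + y^2) * cmod (w + 1)) \<le> 1 / (((real n)^2 + y^2) * y)"
  proof -
    have "y \<le> cmod (w + 1)"
      using abs_Im_le_cmod[of "w + 1"] y by (simp add: w1)
    moreover have "(real n)^2 + y^2 > 0" using y by (simp add: add_nonneg_pos)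
    ultimately show ?thesis using y
      by (intro divide_left_mono mult_left_mono mult_pos_pos) auto
  qed
  finally show ?thesis using m by (simp add: BB_def y_def)
qed

lemma aux_frac: "(A::real) > 0 \<Longrightarrow> B > 0 \<Longrightarrow> B \<le> 4 * A \<Longrightarrow> 1 / A \<le> 4 / B"
  by (simp add: divide_simps)

lemma EE_bound_zero:
  shows "\<bar>EE t n 0\<bar> \<le> BB t n 0"
proof (cases "n = 0")
  case True
  then show ?thesis by (simp add: EE_def FF_def PH_def BB_def)
next
  case False
  then have n: "real n \<ge> 1" by simp
  have f: "FF t n 0 = 1 / (real n)^2" using n by (simp add: FF_def power2_eq_square)
  have p: "PH t n 0 = 1 / real n" using n by (simp add: PH_def power2_eq_square)
  have p1: "PH t (Suc n) 0 = 1 / (real n + 1)" by (simp add: PH_def power2_eq_square add.commute)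
  have e: "EE t n 0 = 1 / ((real n)^2 * (real n + 1))"
    unfolding EE_def f p p1 using n by (simp add: field_simps power2_eq_square)
  have "1 / ((real n)^2 * (real n + 1)) \<le> 4 / (real n + 1)^2"
  proof -
    have "real n + 1 \<le> 2 * real n" using n by simp
    then have "(real n + 1)^2 \<le> (2 * real n)^2" by (rule power_mono) simp
    also have "\<dots> = 4 * (real n)^2 * 1" by (simp add: power2_eq_square)
    also have "\<dots> \<le> 4 * (real n)^2 * (real n + 1)" by (intro mult_left_mono) auto
    finally have le: "(real n + 1)^2 \<le> 4 * ((real n)^2 * (real n + 1))" by simp
    have p1: "(real n)^2 * (real n + 1) > 0" using n by simp
    have p2: "(real n + 1)^2 > 0" using n by simp
    show ?thesis by (rule aux_frac[OF p1 p2 le])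
  qed
  then show ?thesis using n by (simp add: e BB_def)
qed

lemma EE_bound:
  assumes t: "t > 0"
  shows "\<bar>EE t n m\<bar> \<le> BB t n m"
  using EE_bound_zero EE_bound_pos[OF t] by (cases "m = 0") auto



lemma cth_aux: "(E::real) > 1 \<Longrightarrow> (E + 1/E)/(E - 1/E) = 1 + 2/(E*E - 1)"
proof -
  assume E: "E > 1"
  have a: "E*E - 1 > 0" using mult_strict_mono[OF E E] E by simp
  have p: "E + 1/E = (E*E+1)/E" "E - 1/E = (E*E-1)/E" using E by (simp_all add: field_simps)
  have "(E + 1/E)/(E - 1/E) = (E*E + 1)/(E*E - 1)" unfolding p using E by simp
  also have "\<dots> = 1 + 2/(E*E - 1)" using a by (simp add: field_simps)
  finally show ?thesis .
qed

lemma cth_alt: "u > 0 \<Longrightarrow> cth u = 1 + 2 / (exp (2*u) - 1)"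
proof -
  assume u: "u > 0"
  have e: "exp u > 1" using u by simp
  have eu: "exp (2*u) = exp u * exp u" by (metis exp_add mult_2)
  have em: "exp (-u) = 1 / exp u" by (simp add: exp_minus divide_inverse)
  show ?thesis unfolding cth_def eu em by (rule cth_aux[OF e])
qed

lemma cth_ge1: "u > 0 \<Longrightarrow> cth u \<ge> 1"
  using cth_alt[of u] by simp

lemma cth_bound: "u > 0 \<Longrightarrow> cth u \<le> 1 + 1 / u"
proof -
  assume u: "u > 0"
  have "1 + 2*u \<le> exp (2*u)" using exp_ge_add_one_self[of "2*u"] by simp
  then have le: "2*u \<le> exp (2*u) - 1" by linarith
  have "2 / (exp (2*u) - 1) \<le> 2 / (2*u)" using u le
    by (intro divide_left_mono) auto
  then show ?thesis using cth_alt[OF u] by simp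
qed

definition gB :: "real \<Rightarrow> nat \<Rightarrow> real" where
  "gB t m = (if m = 0 then 4 * (pi^2/6) else (1 / (real m * t)) * ((pi * cth (pi * (real m * t)) + 1 / (real m * t)) / (2 * (real m * t))))"

lemma BB_row:
  assumes t: "t > 0"
  shows "(\<lambda>n. BB t n m) sums gB t m"
proof (cases "m = 0")
  case True
  have "(\<lambda>n. 4 * (1 / (real n + 1)^2)) sums (4 * (pi^2/6))"
    using sums_mult[OF inverse_squares_sums, of 4] by (simp add: add.commute)
  moreover have "(\<lambda>n. 4 * (1 / (real n + 1)^2)) = (\<lambda>n. BB t n m)"
    using True by (simp add: BB_def)
  ultimately show ?thesis using True by (simp add: gB_def)
next
  case False
  define y where "y = real m * t"
  have y: "y > 0" using t False by (simp add: y_def)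
  have "(\<lambda>n. (1/y) * (1 / ((real n)^2 + y^2))) sums ((1/y) * ((pi * cth (pi * y) + 1 / y) / (2 * y)))"
    by (rule sums_mult[OF S1'[OF y]])
  moreover have "(\<lambda>n. (1/y) * (1 / ((real n)^2 + y^2))) = (\<lambda>n. BB t n m)"
    using False by (auto simp: BB_def y_def)
  ultimately show ?thesis using False by (simp add: gB_def y_def)
qed

lemma gB_nonneg: "t > 0 \<Longrightarrow> gB t m \<ge> 0"
  using cth_ge1[of "pi * (real m * t)"] by (auto simp: gB_def intro!: mult_nonneg_nonneg divide_nonneg_pos add_nonneg_nonneg)

lemma gB_summable:
  assumes t: "t > 0"
  shows "summable (gB t)"
proof -
  define C where "C = (pi + 2 / t) / (2 * t^2)"
  have s: "summable (\<lambda>m. C * inverse (real m ^ 2))"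
    by (intro summable_mult inverse_power_summable) simp
  show ?thesis
  proof (rule summable_comparison_test'[OF s])
    fix m :: nat assume "m \<ge> 1"
    then have m: "real m \<ge> 1" by simp
    define y where "y = real m * t"
    have y: "y > 0" "y \<ge> t" using t m by (auto simp: y_def)
    have c: "cth (pi * y) \<le> 1 + 1 / (pi * y)" using y by (intro cth_bound) simp
    have "gB t m = (pi * cth (pi * y) + 1 / y) / (2 * y^2)"
      using m y by (simp add: gB_def y_def[symmetric] power2_eq_square)
    also have "\<dots> \<le> (pi * (1 + 1 / (pi * y)) + 1 / y) / (2 * y^2)"
      using c y by (intro divide_right_mono add_right_mono mult_left_mono) auto
    also have "\<dots> = (pi + 2 / y) / (2 * y^2)" using y by (simp add: field_simps)
    also have "\<dots> \<le> (pi + 2 / t) / (2 * y^2)"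
      using y t by (intro divide_right_mono add_left_mono divide_left_mono) auto
    also have "\<dots> = C * inverse (real m ^ 2)"
      by (simp add: C_def y_def power_mult_distrib field_simps)
    finally show "norm (gB t m) \<le> C * inverse (real m ^ 2)"
      using gB_nonneg[OF t, of m] by simp
  qed
qed

lemma BB_nonneg: "t > 0 \<Longrightarrow> BB t n m \<ge> 0"
  by (auto simp: BB_def intro!: divide_nonneg_pos mult_pos_pos add_nonneg_pos)

lemma BB_summable_on:
  assumes t: "t > 0"
  shows "(\<lambda>(m,n). BB t n m) summable_on UNIV"
proof -
  have "(\<lambda>(m,n). BB t n m) summable_on Sigma UNIV (\<lambda>_. UNIV)"
  proof (rule summable_on_SigmaI[where g = "gB t"])
    fix m :: nat
    show "((\<lambda>n. case (m, n) of (m, n) \<Rightarrow> BB t n m) has_sum gB t m) UNIV"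
      using sums_nonneg_imp_has_sum[OF BB_row[OF t, of m] BB_nonneg[OF t]] by simp
  next
    show "gB t summable_on UNIV"
      using summable_on_UNIV_nonneg_real_iff[of "gB t"] gB_nonneg[OF t] gB_summable[OF t] by simp
  next
    fix m n :: nat
    show "(case (m, n) of (m, n) \<Rightarrow> BB t n m) \<ge> 0" using BB_nonneg[OF t] by simp
  qed
  then show ?thesis by simp
qed

lemma EE_summable_on:
  assumes t: "t > 0"
  shows "(\<lambda>(m,n). EE t n m) summable_on UNIV"
proof -
  have "(\<lambda>x. norm (case x of (m,n) \<Rightarrow> EE t n m)) summable_on UNIV"
  proof (rule Infinite_Sum.abs_summable_on_comparison_test)
    show "(\<lambda>x. norm (case x of (m,n) \<Rightarrow> BB t n m)) summable_on UNIV"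
      using BB_summable_on[OF t] summable_on_iff_abs_summable_on_real by blast
    fix x :: "nat \<times> nat"
    show "norm (case x of (m, n) \<Rightarrow> EE t n m) \<le> norm (case x of (m, n) \<Rightarrow> BB t n m)"
      using EE_bound[OF t] BB_nonneg[OF t] by (cases x) auto
  qed
  then show ?thesis using summable_on_iff_abs_summable_on_real by blast
qed



definition AA :: "real \<Rightarrow> nat \<Rightarrow> real" where
  "AA t m = (if m = 0 then pi^2/6 else (- (pi^2 * csch2 (pi * (real m * t))) - 1 / (real m * t)^2) / 2)"

lemma has_sum_diff':
  fixes f g :: "'a \<Rightarrow> real"
  assumes "(f has_sum a) A" "(g has_sum b) A"
  shows "((\<lambda>x. f x - g x) has_sum (a - b)) A"
  using has_sum_add[OF assms(1) has_sum_uminusI[OF assms(2)]] by simp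

lemma FF_row_zero: "((\<lambda>n. FF t n 0) has_sum (pi^2/6)) UNIV"
proof -
  have "(\<lambda>n. FF t (Suc n) 0) sums (pi^2/6)"
  proof -
    have "(\<lambda>n. FF t (Suc n) 0) = (\<lambda>n. 1 / (real n + 1)^2)"
      by (rule ext) (simp add: FF_def power2_eq_square add.commute)
    then show ?thesis using inverse_squares_sums by (simp add: add.commute)
  qed
  then have "(\<lambda>n. FF t n 0) sums (pi^2/6 + FF t 0 0)" by (rule iffD1[OF sums_Suc_iff])
  moreover have "FF t 0 0 = 0" by (simp add: FF_def)
  ultimately have "(\<lambda>n. FF t n 0) sums (pi^2/6)" by simp
  moreover have "\<And>n. FF t n 0 \<ge> 0" by (simp add: FF_def)
  ultimately show ?thesis by (rule sums_nonneg_imp_has_sum)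
qed

lemma FF_abs_le:
  assumes a: "(b::real) > 0"
  shows "\<bar>(x^2 - b^2) / (x^2 + b^2)^2\<bar> \<le> 1 / (x^2 + b^2)"
proof -
  have p: "x^2 + b^2 > 0" using a by (simp add: add_nonneg_pos)
  have "\<bar>x^2 - b^2\<bar> \<le> x^2 + b^2" by (auto simp: abs_le_iff)
  then have "\<bar>x^2 - b^2\<bar> / (x^2 + b^2)^2 \<le> (x^2 + b^2) / (x^2 + b^2)^2"
    by (intro divide_right_mono) auto
  also have "\<dots> = 1 / (x^2 + b^2)" using p by (simp add: power2_eq_square)
  finally show ?thesis by (simp add: abs_div)
qed

lemma FF_row_pos:
  assumes t: "t > 0" and m: "m > 0"
  shows "((\<lambda>n. FF t n m) has_sum AA t m) UNIV"
proof -
  define y where "y = real m * t"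
  have y: "y > 0" using t m by (simp add: y_def)
  have ef: "(\<lambda>n. FF t n m) = (\<lambda>n. ((real n)^2 - y^2) / ((real n)^2 + y^2)^2)"
    by (simp only: FF_def y_def)
  have ea: "AA t m = (- (pi^2 * csch2 (pi * y)) - 1 / y^2) / 2"
    using m by (simp add: AA_def y_def)
  have s: "(\<lambda>n. FF t n m) sums AA t m"
    unfolding ef ea by (rule S2[OF y])
  have "summable (\<lambda>n. norm (FF t n m))"
  proof (rule summable_comparison_test'[OF sums_summable[OF S1'[OF y]]])
    fix n :: nat
    have "FF t n m = ((real n)^2 - y^2) / ((real n)^2 + y^2)^2" by (simp only: FF_def y_def)
    then show "norm (norm (FF t n m)) \<le> 1 / ((real n)^2 + y^2)"
      using FF_abs_le[OF y, of "real n"] by simp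
  qed
  then show ?thesis by (rule norm_summable_imp_has_sum[OF _ s])
qed

lemma FF_row: "t > 0 \<Longrightarrow> ((\<lambda>n. FF t n m) has_sum AA t m) UNIV"
  using FF_row_zero FF_row_pos by (cases "m = 0") (auto simp: AA_def)

lemma PH_lim: "t > 0 \<Longrightarrow> (\<lambda>n. PH t n m) \<longlonglongrightarrow> 0"
proof -
  assume t: "t > 0"
  show ?thesis
  proof (rule Lim_null_comparison[OF _ lim_inverse_n'])
    show "\<forall>\<^sub>F n in sequentially. norm (PH t n m) \<le> 1 / real n"
    proof (rule eventually_sequentiallyI[of 1])
      fix n :: nat assume "n \<ge> 1"
      then have n: "real n > 0" by simp
      have "PH t n m \<le> real n / (real n)^2"
        unfolding PH_def using n by (intro divide_left_mono) (auto simp: add_pos_nonneg)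
      also have "\<dots> = 1 / real n" using n by (simp add: power2_eq_square)
      finally show "norm (PH t n m) \<le> 1 / real n" using n by (simp add: PH_def)
    qed
  qed
qed

lemma EE_row:
  assumes t: "t > 0"
  shows "((\<lambda>n. EE t n m) has_sum AA t m) UNIV"
proof -
  have "(\<lambda>(m,n). EE t n m) summable_on (UNIV \<times> UNIV)" using EE_summable_on[OF t] by simp
  from summable_on_SigmaD1[OF this, of m] have se: "(\<lambda>n. EE t n m) summable_on UNIV" by simp
  then have he: "((\<lambda>n. EE t n m) has_sum (infsum (\<lambda>n. EE t n m) UNIV)) UNIV" by (rule has_sum_infsum)
  have "((\<lambda>n. FF t n m - EE t n m) has_sum (AA t m - infsum (\<lambda>n. EE t n m) UNIV)) UNIV"
    by (rule has_sum_diff'[OF FF_row[OF t] he])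
  then have "(\<lambda>n. FF t n m - EE t n m) sums (AA t m - infsum (\<lambda>n. EE t n m) UNIV)"
    by (rule has_sum_imp_sums)
  moreover have "(\<lambda>n. FF t n m - EE t n m) sums 0"
  proof -
    have "(\<lambda>n. PH t n m - PH t (Suc n) m) sums (PH t 0 m - 0)"
      by (rule telescope_sums'[OF PH_lim[OF t]])
    then show ?thesis by (simp add: EE_def PH_def)
  qed
  ultimately have "AA t m - infsum (\<lambda>n. EE t n m) UNIV = 0" by (rule sums_unique2)
  then show ?thesis using he by simp
qed



lemma hPH:
  fixes a t x :: real
  assumes t: "t > 0" and X: "x^2 + a^2 > 0"
  shows "(a*t)/((a*t)^2 + (x*t)^2) = (1/t)*(a/(x^2+a^2))"
proof -
  have d: "(a*t)^2 + (x*t)^2 = t^2 * (x^2 + a^2)" by (simp add: power_mult_distrib algebra_simps)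
  define X where "X = x^2 + a^2"
  have "X > 0" using X by (simp add: X_def)
  then have "(a*t)/(t^2 * X) = (1/t)*(a/X)" using t by (simp add: field_simps power2_eq_square)
  then show ?thesis unfolding d X_def .
qed
lemma hFF:
  fixes a t x :: real
  assumes t: "t > 0" and X: "x^2 + a^2 > 0"
  shows "((a*t)^2 - (x*t)^2)/((a*t)^2 + (x*t)^2)^2 = (- (1/t^2)) * ((x^2 - a^2)/(x^2+a^2)^2)"
proof -
  have d: "(a*t)^2 + (x*t)^2 = t^2 * (x^2 + a^2)" by (simp add: power_mult_distrib algebra_simps)
  have d2: "(a*t)^2 - (x*t)^2 = t^2 * (a^2 - x^2)" by (simp add: power_mult_distrib algebra_simps)
  define X where "X = x^2 + a^2"
  define Y where "Y = a^2 - x^2"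
  have "X > 0" using X by (simp add: X_def)
  then have "t^2 * Y / (t^2 * X)^2 = (- (1/t^2)) * ((- Y)/X^2)"
    using t by (simp add: field_simps power2_eq_square)
  then show ?thesis unfolding d d2 X_def Y_def by simp
qed
lemma hF0:
  fixes x t :: real
  assumes "x > 0" "t > 0"
  shows "(0^2 - (x*t)^2)/(0^2 + (x*t)^2)^2 = - ((1/t^2) * (1/x^2))"
  using assms by (simp add: field_simps power2_eq_square)

definition FFc :: "real \<Rightarrow> nat \<Rightarrow> real" where
  "FFc t n = (if n = 0 then - ((1/t^2) * (pi^2/6)) else (pi^2 * csch2 (pi * (real n / t)) + t^2 / (real n)^2) / (2 * t^2))"
definition PP :: "real \<Rightarrow> nat \<Rightarrow> real" where
  "PP t n = (if n = 0 then 0 else (pi * cth (pi * (real n / t)) + t / real n) / (2 * t))"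
definition Cc :: "real \<Rightarrow> nat \<Rightarrow> real" where
  "Cc t n = FFc t n - PP t n + PP t (Suc n)"

lemma PH_col:
  assumes t: "t > 0"
  shows "((\<lambda>m. PH t n m) has_sum PP t n) UNIV"
proof (cases "n = 0")
  case True
  have "(\<lambda>m. PH t n m) sums PP t n" using True by (simp add: PH_def PP_def)
  then show ?thesis by (rule sums_nonneg_imp_has_sum) (simp add: PH_def)
next
  case False
  define a where "a = real n / t"
  have a: "a > 0" using t False by (simp add: a_def)
  have na: "real n = a * t" using t by (simp add: a_def)
  have "(\<lambda>m. (1/t) * (a / ((real m)^2 + a^2))) sums ((1/t) * ((pi * cth (pi * a) + 1 / a) / 2))"
    by (rule sums_mult[OF S1[OF a]])
  moreover have "(\<lambda>m. (1/t) * (a / ((real m)^2 + a^2))) = (\<lambda>m. PH t n m)"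
  proof
    fix m
    have "(real m)^2 + a^2 > 0" using a by (simp add: add_nonneg_pos)
    then show "(1/t) * (a / ((real m)^2 + a^2)) = PH t n m"
      unfolding PH_def na using hPH[OF t] by simp
  qed
  moreover have "(1/t) * ((pi * cth (pi * a) + 1 / a) / 2) = PP t n"
    using False t by (simp add: PP_def a_def field_simps)
  ultimately have "(\<lambda>m. PH t n m) sums PP t n" by simp
  then show ?thesis by (rule sums_nonneg_imp_has_sum) (simp add: PH_def)
qed

lemma FF_col_zero:
  assumes t: "t > 0"
  shows "((\<lambda>m. FF t 0 m) has_sum FFc t 0) UNIV"
proof -
  have "(\<lambda>m. (1/t^2) * (1 / (real m + 1)^2)) sums ((1/t^2) * (pi^2/6))"
    using sums_mult[OF inverse_squares_sums, of "1/t^2"] by (simp add: add.commute)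
  moreover have "(\<lambda>m. (1/t^2) * (1 / (real m + 1)^2)) = (\<lambda>m. - FF t 0 (Suc m))"
  proof
    fix m
    have "real (Suc m) > 0" by simp
    from hF0[OF this t] show "(1/t^2) * (1 / (real m + 1)^2) = - FF t 0 (Suc m)"
      by (simp add: FF_def add.commute)
  qed
  ultimately have "(\<lambda>m. - FF t 0 (Suc m)) sums ((1/t^2) * (pi^2/6))" by simp
  then have "(\<lambda>m. - FF t 0 m) sums ((1/t^2) * (pi^2/6) + - FF t 0 0)"
    by (rule iffD1[OF sums_Suc_iff])
  moreover have "FF t 0 0 = 0" by (simp add: FF_def)
  ultimately have "(\<lambda>m. - FF t 0 m) sums ((1/t^2) * (pi^2/6))" by simp
  then have "((\<lambda>m. - FF t 0 m) has_sum ((1/t^2) * (pi^2/6))) UNIV"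
    by (rule sums_nonneg_imp_has_sum) (simp add: FF_def)
  moreover have "FFc t 0 = - ((1/t^2) * (pi^2/6))" by (simp only: FFc_def refl if_True)
  ultimately show ?thesis using has_sum_uminusI by fastforce
qed

lemma FF_col_pos:
  assumes t: "t > 0" and n: "n > 0"
  shows "((\<lambda>m. FF t n m) has_sum FFc t n) UNIV"
proof -
  define a where "a = real n / t"
  have a: "a > 0" using t n by (simp add: a_def)
  have na: "real n = a * t" using t by (simp add: a_def)
  have eq: "FF t n m = (- (1/t^2)) * (((real m)^2 - a^2) / ((real m)^2 + a^2)^2)" for m
  proof -
    have "(real m)^2 + a^2 > 0" using a by (simp add: add_nonneg_pos)
    then show ?thesis unfolding FF_def na by (rule hFF[OF t])
  qed
  have "(\<lambda>m. (- (1/t^2)) * (((real m)^2 - a^2) / ((real m)^2 + a^2)^2)) sums ((- (1/t^2)) * ((- (pi^2 * csch2 (pi * a)) - 1 / a^2) / 2))"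
    by (rule sums_mult[OF S2[OF a]])
  moreover have "(- (1/t^2)) * ((- (pi^2 * csch2 (pi * a)) - 1 / a^2) / 2) = FFc t n"
    using n t by (simp add: FFc_def a_def field_simps)
  ultimately have s: "(\<lambda>m. FF t n m) sums FFc t n" by (simp only: eq)
  have "summable (\<lambda>m. norm (FF t n m))"
  proof (rule summable_comparison_test'[OF summable_mult[OF sums_summable[OF S1'[OF a]], of "1/t^2"]])
    fix m :: nat
    have "norm (norm (FF t n m)) = (1/t^2) * \<bar>((real m)^2 - a^2) / ((real m)^2 + a^2)^2\<bar>"
      unfolding eq by (simp add: abs_mult)
    also have "\<dots> \<le> (1/t^2) * (1 / ((real m)^2 + a^2))"
      by (intro mult_left_mono FF_abs_le[OF a]) simp
    finally show "norm (norm (FF t n m)) \<le> (1/t^2) * (1 / ((real m)^2 + a^2))" .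
  qed
  then show ?thesis by (rule norm_summable_imp_has_sum[OF _ s])
qed

lemma FF_col: "t > 0 \<Longrightarrow> ((\<lambda>m. FF t n m) has_sum FFc t n) UNIV"
  using FF_col_zero FF_col_pos by (cases "n = 0") auto

lemma EE_col:
  assumes t: "t > 0"
  shows "((\<lambda>m. EE t n m) has_sum Cc t n) UNIV"
  using has_sum_add[OF has_sum_diff'[OF FF_col[OF t] PH_col[OF t]] PH_col[OF t, of "Suc n"]]
  by (simp add: EE_def Cc_def)



lemma PP_lim:
  assumes t: "t > 0"
  shows "PP t \<longlonglongrightarrow> pi / (2*t)"
proof -
  have "(\<lambda>n. (pi * ((exp (pi * (real n / t)) + exp (-(pi * (real n / t)))) / (exp (pi * (real n / t)) - exp (-(pi * (real n / t))))) + t / real n) / (2 * t)) \<longlonglongrightarrow> pi * inverse t / 2"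
    using t by real_asymp
  moreover have "pi * inverse t / 2 = pi / (2*t)" by (simp add: field_simps)
  ultimately have "(\<lambda>n. (pi * ((exp (pi * (real n / t)) + exp (-(pi * (real n / t)))) / (exp (pi * (real n / t)) - exp (-(pi * (real n / t))))) + t / real n) / (2 * t)) \<longlonglongrightarrow> pi / (2*t)"
    by simp
  then show ?thesis
    by (rule Lim_transform_eventually) (auto simp: PP_def cth_def intro!: eventually_sequentiallyI[of 1])
qed

lemma auxK: "(p::real) \<noteq> 0 \<Longrightarrow> t \<noteq> 0 \<Longrightarrow> s \<noteq> 0 \<Longrightarrow> (- 2 * ((-(p^2*c) - 1/(s*t)^2)/2) - (1/t^2)*(1/s^2))/p^2 = c"
  by (simp add: field_simps power_mult_distrib)

lemma fubini_EE:
  assumes t: "t > 0"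
  shows "\<exists>T. AA t sums T \<and> Cc t sums T"
proof -
  define T where "T = infsum (\<lambda>(m,n). EE t n m) UNIV"
  have h: "((\<lambda>(m,n). EE t n m) has_sum T) (UNIV \<times> UNIV)"
    using has_sum_infsum[OF EE_summable_on[OF t]] by (simp add: T_def)
  have "(AA t has_sum T) UNIV"
    by (rule has_sum_Sigma'[OF h]) (use EE_row[OF t] in simp)
  moreover have "(Cc t has_sum T) UNIV"
  proof -
    have h2: "((\<lambda>(n,m). EE t n m) has_sum T) (UNIV \<times> UNIV)"
      using has_sum_swap[THEN iffD1, OF h] by simp
    show ?thesis
      by (rule has_sum_Sigma'[OF h2]) (use EE_col[OF t] in simp)
  qed
  ultimately show ?thesis by (auto dest: has_sum_imp_sums)
qed

lemma K_relation:
  assumes t: "t > 0"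
  shows "\<exists>K K'. (\<lambda>m. csch2 (pi * (real (Suc m) * t))) sums K \<and>
                (\<lambda>m. csch2 (pi * (real (Suc m) / t))) sums K' \<and>
                K + K' / t^2 = 1/6 + 1/(6 * t^2) - 1 / (pi * t)"
proof -
  obtain T where TA: "AA t sums T" and TC: "Cc t sums T" using fubini_EE[OF t] by blast
  have pi0: "pi \<noteq> 0" by simp
  have isq: "(\<lambda>m. 1 / (real (Suc m))^2) sums (pi^2/6)"
    using inverse_squares_sums by (simp add: add.commute)
  have "AA t sums (T - pi^2/6 + AA t 0)" using TA by (simp add: AA_def)
  then have A1: "(\<lambda>m. AA t (Suc m)) sums (T - pi^2/6)" by (rule iffD2[OF sums_Suc_iff])
  define K where "K = (- 2 * (T - pi^2/6) - (1/t^2) * (pi^2/6)) / pi^2"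
  have "(\<lambda>m. (- 2 * AA t (Suc m) - (1/t^2) * (1 / (real (Suc m))^2)) / pi^2) sums K"
    unfolding K_def by (intro sums_divide sums_diff sums_mult A1 isq)
  moreover have "(\<lambda>m. (- 2 * AA t (Suc m) - (1/t^2) * (1 / (real (Suc m))^2)) / pi^2) =
                 (\<lambda>m. csch2 (pi * (real (Suc m) * t)))"
  proof
    fix m
    show "(- 2 * AA t (Suc m) - (1/t^2) * (1 / (real (Suc m))^2)) / pi^2 = csch2 (pi * (real (Suc m) * t))"
      unfolding AA_def using t pi0 by (simp only: nat.simps if_False auxK) (rule auxK, auto)
  qed
  ultimately have sK: "(\<lambda>m. csch2 (pi * (real (Suc m) * t))) sums K" by simp
  have tel: "(\<lambda>n. PP t n - PP t (Suc n)) sums (PP t 0 - pi / (2*t))"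
    by (rule telescope_sums'[OF PP_lim[OF t]])
  have "(\<lambda>n. Cc t n + (PP t n - PP t (Suc n))) sums (T + (PP t 0 - pi / (2*t)))"
    by (rule sums_add[OF TC tel])
  then have F: "FFc t sums (T - pi / (2*t))"
    by (simp add: Cc_def PP_def)
  have "FFc t sums (T - pi / (2*t) + (1/t^2) * (pi^2/6) + FFc t 0)" using F by (simp add: FFc_def)
  then have F1: "(\<lambda>n. FFc t (Suc n)) sums (T - pi / (2*t) + (1/t^2) * (pi^2/6))"
    by (rule iffD2[OF sums_Suc_iff])
  define K' where "K' = (2 * t^2 * (T - pi / (2*t) + (1/t^2) * (pi^2/6)) - t^2 * (pi^2/6)) / pi^2"
  have "(\<lambda>n. (2 * t^2 * FFc t (Suc n) - t^2 * (1 / (real (Suc n))^2)) / pi^2) sums K'"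
    unfolding K'_def by (intro sums_divide sums_diff sums_mult F1 isq)
  moreover have "(\<lambda>n. (2 * t^2 * FFc t (Suc n) - t^2 * (1 / (real (Suc n))^2)) / pi^2) =
                 (\<lambda>n. csch2 (pi * (real (Suc n) / t)))"
  proof
    fix n
    show "(2 * t^2 * FFc t (Suc n) - t^2 * (1 / (real (Suc n))^2)) / pi^2 = csch2 (pi * (real (Suc n) / t))"
      unfolding FFc_def using t pi0 by (simp add: field_simps)
  qed
  ultimately have sK': "(\<lambda>n. csch2 (pi * (real (Suc n) / t))) sums K'" by simp
  have "K + K' / t^2 = 1/6 + 1/(6 * t^2) - 1 / (pi * t)"
    unfolding K_def K'_def using t pi0 by (simp add: field_simps power2_eq_square)
  then show ?thesis using sK sK' by blast
qed



lemma l1: "(Y::real) > 1 \<Longrightarrow> (1/Y)/(1 - 1/Y)^2 = Y/(Y-1)^2"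
proof -
  assume Y: "Y > 1"
  have a: "1 - 1/Y = (Y-1)/Y" using Y by (simp add: field_simps)
  show ?thesis unfolding a using Y by (simp add: power_divide power2_eq_square)
qed

lemma l2: "(E::real) > 1 \<Longrightarrow> 1/(E - 1/E)^2 = (E*E)/(E*E-1)^2"
proof -
  assume E: "E > 1"
  have a: "E - 1/E = (E*E-1)/E" using E by (simp add: field_simps)
  show ?thesis unfolding a using E by (simp add: power_divide power2_eq_square)
qed

lemma csch2_q:
  assumes u: "u > 0"
  shows "csch2 u / 4 = exp (-(2*u)) / (1 - exp (-(2*u)))^2"
proof -
  define E where "E = exp u"
  have E: "E > 1" using u by (simp add: E_def)
  have e2: "exp (2*u) = exp u * exp u" by (metis exp_add mult_2)
  have q: "exp (-(2*u)) = 1 / (E*E)" by (simp add: E_def exp_minus e2 divide_inverse)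
  have em: "exp (-u) = 1 / E" by (simp add: E_def exp_minus divide_inverse)
  have Y: "E*E > 1" using mult_strict_mono[OF E E] E by simp
  have "csch2 u / 4 = 1 / (E - 1/E)^2" by (simp add: csch2_def em E_def)
  also have "\<dots> = (E*E)/(E*E-1)^2" by (rule l2[OF E])
  also have "\<dots> = (1/(E*E))/(1 - 1/(E*E))^2" by (rule l1[OF Y, symmetric])
  finally show ?thesis unfolding q .
qed

lemma lambert:
  assumes t: "t > 0" and sK: "(\<lambda>m. csch2 (pi * (real (Suc m) * t))) sums K"
  shows "(\<lambda>r. real (Suc r) / (exp (real (Suc r) * (2*pi*t)) - 1)) sums (K/4)"
proof -
  define h where "h = (\<lambda>(m::nat, r::nat). real (Suc r) * exp (- (2*pi*t * real (Suc m) * real (Suc r))))"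
  have hnn: "h (m, r) \<ge> 0" for m r by (simp add: h_def)
  have row: "((\<lambda>r. h (m, r)) has_sum (csch2 (pi * (real (Suc m) * t)) / 4)) UNIV" for m
  proof -
    define q where "q = exp (- (2*pi*t * real (Suc m)))"
    have q: "norm q < 1" "q > 0" using t by (auto simp: q_def)
    have A: "(\<lambda>r. q * (real (Suc r) * q ^ r)) sums (q * (1 / (1 - q)^2))"
      by (intro sums_mult geometric_deriv_sums q)
    have L: "(\<lambda>r. q * (real (Suc r) * q ^ r)) = (\<lambda>r. h (m, r))"
    proof
      fix r
      have "q ^ Suc r = exp (real (Suc r) * (- (2*pi*t * real (Suc m))))"
        unfolding q_def by (rule exp_of_nat_mult[symmetric])
      also have "\<dots> = exp (- (2*pi*t * real (Suc m) * real (Suc r)))"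
        by (intro arg_cong[where f=exp]) (simp add: algebra_simps)
      finally have "exp (- (2*pi*t * real (Suc m) * real (Suc r))) = q ^ Suc r" by simp
      then show "q * (real (Suc r) * q ^ r) = h (m, r)" by (simp add: h_def)
    qed
    have V: "q * (1 / (1 - q)^2) = csch2 (pi * (real (Suc m) * t)) / 4"
    proof -
      have u: "pi * (real (Suc m) * t) > 0" using t by simp
      have eqa: "2 * (pi * (real (Suc m) * t)) = 2*pi*t * real (Suc m)" by (simp add: algebra_simps)
      from csch2_q[OF u] have "csch2 (pi * (real (Suc m) * t)) / 4 = q / (1 - q)^2"
        unfolding eqa q_def .
      then show ?thesis by simp
    qed
    have "(\<lambda>r. h (m, r)) sums (csch2 (pi * (real (Suc m) * t)) / 4)" using A unfolding L V .
    then show ?thesis by (rule sums_nonneg_imp_has_sum) (simp add: hnn)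
  qed
  have col: "((\<lambda>m. h (m, r)) has_sum (real (Suc r) / (exp (real (Suc r) * (2*pi*t)) - 1))) UNIV" for r
  proof -
    define Q where "Q = exp (- (2*pi*t * real (Suc r)))"
    have Q: "norm Q < 1" "Q > 0" using t by (auto simp: Q_def)
    have A: "(\<lambda>m. (real (Suc r) * Q) * Q ^ m) sums ((real (Suc r) * Q) * (1 / (1 - Q)))"
      by (intro sums_mult geometric_sums Q)
    have L: "(\<lambda>m. (real (Suc r) * Q) * Q ^ m) = (\<lambda>m. h (m, r))"
    proof
      fix m
      have "Q ^ Suc m = exp (real (Suc m) * (- (2*pi*t * real (Suc r))))"
        unfolding Q_def by (rule exp_of_nat_mult[symmetric])
      also have "\<dots> = exp (- (2*pi*t * real (Suc m) * real (Suc r)))"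
        by (intro arg_cong[where f=exp]) (simp add: algebra_simps)
      finally have "exp (- (2*pi*t * real (Suc m) * real (Suc r))) = Q ^ Suc m" by simp
      then show "(real (Suc r) * Q) * Q ^ m = h (m, r)" by (simp add: h_def)
    qed
    have V: "(real (Suc r) * Q) * (1 / (1 - Q)) = real (Suc r) / (exp (real (Suc r) * (2*pi*t)) - 1)"
    proof -
      define E where "E = exp (real (Suc r) * (2*pi*t))"
      have E: "E > 1" using t by (simp add: E_def)
      have Q2: "Q = exp (- (real (Suc r) * (2*pi*t)))"
        unfolding Q_def by (intro arg_cong[where f=exp]) (simp add: algebra_simps)
      have QE: "Q = 1 / E" unfolding Q2 E_def by (simp add: exp_minus divide_inverse)
      show ?thesis unfolding QE E_def[symmetric] using E by (simp add: field_simps)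
    qed
    have "(\<lambda>m. h (m, r)) sums (real (Suc r) / (exp (real (Suc r) * (2*pi*t)) - 1))" using A unfolding L V .
    then show ?thesis by (rule sums_nonneg_imp_has_sum) (simp add: hnn)
  qed
  have gs: "(\<lambda>m. csch2 (pi * (real (Suc m) * t)) / 4) summable_on UNIV"
  proof -
    have "(\<lambda>m. csch2 (pi * (real (Suc m) * t)) / 4) sums (K/4)" by (rule sums_divide[OF sK])
    then have "summable (\<lambda>m. csch2 (pi * (real (Suc m) * t)) / 4)" by (rule sums_summable)
    then show ?thesis by (subst summable_on_UNIV_nonneg_real_iff) (auto simp: csch2_def)
  qed
  have hs: "h summable_on (UNIV \<times> UNIV)"
    using summable_on_SigmaI[where f = h and A = UNIV and B = "\<lambda>_. UNIV", OF row gs] hnn by auto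
  have "((\<lambda>m. csch2 (pi * (real (Suc m) * t)) / 4) has_sum infsum h (UNIV \<times> UNIV)) UNIV"
    by (rule has_sum_Sigma'[OF has_sum_infsum[OF hs]]) (use row in simp)
  moreover have "((\<lambda>m. csch2 (pi * (real (Suc m) * t)) / 4) has_sum (K/4)) UNIV"
    by (rule sums_nonneg_imp_has_sum[OF sums_divide[OF sK]]) (auto simp: csch2_def)
  ultimately have tot: "infsum h (UNIV \<times> UNIV) = K/4" using has_sum_unique by blast
  have h2: "((\<lambda>(r,m). h (m, r)) has_sum (K/4)) (UNIV \<times> UNIV)"
    using has_sum_swap[THEN iffD1, OF has_sum_infsum[OF hs]] unfolding tot .
  have "((\<lambda>r. real (Suc r) / (exp (real (Suc r) * (2*pi*t)) - 1)) has_sum (K/4)) UNIV"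
    by (rule has_sum_Sigma'[OF h2]) (use col in simp)
  then show ?thesis by (rule has_sum_imp_sums)
qed



lemma lam_at:
  assumes t: "t > 0"
  shows "\<exists>K K'. (\<lambda>r. real (Suc r) / (exp (real (Suc r) * (2*pi*t)) - 1)) sums (K/4) \<and>
                (\<lambda>r. real (Suc r) / (exp (real (Suc r) * (2*pi*(1/t))) - 1)) sums (K'/4) \<and>
                K + K' / t^2 = 1/6 + 1/(6 * t^2) - 1 / (pi * t)"
proof -
  obtain K K' where sK: "(\<lambda>m. csch2 (pi * (real (Suc m) * t))) sums K"
    and sK': "(\<lambda>m. csch2 (pi * (real (Suc m) / t))) sums K'"
    and rel: "K + K' / t^2 = 1/6 + 1/(6 * t^2) - 1 / (pi * t)"
    using K_relation[OF t] by blast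
  have sK'': "(\<lambda>m. csch2 (pi * (real (Suc m) * (1/t)))) sums K'" using sK' by simp
  show ?thesis using lambert[OF t sK] lambert[OF _ sK''] t rel by auto
qed

lemma final_combination:
  fixes S1 S2 S4 :: real
  assumes s1: "(\<lambda>r. real (Suc r) / (exp (real (Suc r) * pi) - 1)) sums S1"
      and s2: "(\<lambda>r. real (Suc r) / (exp (real (Suc r) * (2*pi)) - 1)) sums S2"
      and s4: "(\<lambda>r. real (Suc r) / (exp (real (Suc r) * (4*pi)) - 1)) sums S4"
  shows "(\<lambda>n. real (Suc n) * exp (real (Suc n) * pi) / (exp (2 * pi * real (Suc n)) - 1)) sums (S1 - S2)"
    and "(\<lambda>n. real (Suc n) * (-1) ^ (Suc n) / (exp (2 * pi * real (Suc n)) - 1)) sums (4 * S4 - S2)"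
proof -
  have "(\<lambda>n. real (Suc n) / (exp (real (Suc n) * pi) - 1) - real (Suc n) / (exp (real (Suc n) * (2*pi)) - 1)) sums (S1 - S2)"
    by (rule sums_diff[OF s1 s2])
  moreover have "(\<lambda>n. real (Suc n) / (exp (real (Suc n) * pi) - 1) - real (Suc n) / (exp (real (Suc n) * (2*pi)) - 1))
      = (\<lambda>n. real (Suc n) * exp (real (Suc n) * pi) / (exp (2 * pi * real (Suc n)) - 1))"
  proof
    fix n
    define E where "E = exp (real (Suc n) * pi)"
    have E: "E > 1" by (simp add: E_def)
    have base: "exp (2 * (real (Suc n) * pi)) = E * E" unfolding E_def by (metis exp_add mult_2)
    have f1: "exp (real (Suc n) * (2*pi)) = exp (2 * (real (Suc n) * pi))"
      by (intro arg_cong[where f=exp]) (simp add: algebra_simps)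
    have f2: "exp (2 * pi * real (Suc n)) = exp (2 * (real (Suc n) * pi))"
      by (intro arg_cong[where f=exp]) (simp add: algebra_simps)
    have E2: "exp (real (Suc n) * (2*pi)) = E * E" "exp (2 * pi * real (Suc n)) = E * E"
      unfolding f1 f2 by (rule base)+
    have a: "E - 1 > 0" "E * E - 1 > 0" using E mult_strict_mono[OF E E] by auto
    have "1 / (E - 1) - 1 / (E * E - 1) = E / (E * E - 1)"
    proof -
      have fa: "E * E - 1 = (E - 1) * (E + 1)" by (simp add: algebra_simps)
      have "1 / (E - 1) = (E + 1) / ((E - 1) * (E + 1))" using a E by simp
      then have h: "1 / (E - 1) = (E + 1) / (E * E - 1)" unfolding fa .
      have "(E + 1) / (E * E - 1) - 1 / (E * E - 1) = ((E + 1) - 1) / (E * E - 1)"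
        by (rule diff_divide_distrib[symmetric])
      then show ?thesis unfolding h by simp
    qed
    then show "real (Suc n) / (exp (real (Suc n) * pi) - 1) - real (Suc n) / (exp (real (Suc n) * (2*pi)) - 1) =
        real (Suc n) * exp (real (Suc n) * pi) / (exp (2 * pi * real (Suc n)) - 1)"
      unfolding E2 E_def[symmetric]
      by (metis (no_types, lifting) right_diff_distrib times_divide_eq_right mult.right_neutral)
  qed
  ultimately show "(\<lambda>n. real (Suc n) * exp (real (Suc n) * pi) / (exp (2 * pi * real (Suc n)) - 1)) sums (S1 - S2)"
    by simp
next
  define b where "b n = real (Suc n) / (exp (2 * pi * real (Suc n)) - 1)" for n
  define d where "d n = (1 + (-1) ^ Suc n) * b n" for n
  have beq: "b = (\<lambda>r. real (Suc r) / (exp (real (Suc r) * (2*pi)) - 1))"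
    by (rule ext) (simp add: b_def mult_ac)
  have sb: "b sums S2" unfolding beq by (rule s2)
  have "(\<lambda>k. d (2*k+1)) sums (4 * S4)"
  proof -
    have "(\<lambda>k. 4 * (real (Suc k) / (exp (real (Suc k) * (4*pi)) - 1))) sums (4 * S4)"
      by (rule sums_mult[OF s4])
    moreover have "(\<lambda>k. 4 * (real (Suc k) / (exp (real (Suc k) * (4*pi)) - 1))) = (\<lambda>k. d (2*k+1))"
    proof
      fix k
      have "real (Suc (2*k+1)) = 2 * real (Suc k)" by simp
      moreover have "2 * pi * (2 * real (Suc k)) = real (Suc k) * (4*pi)" by (simp add: algebra_simps)
      ultimately show "4 * (real (Suc k) / (exp (real (Suc k) * (4*pi)) - 1)) = d (2*k+1)"
        by (simp add: d_def b_def)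
    qed
    ultimately show ?thesis by simp
  qed
  moreover have "strict_mono (\<lambda>k::nat. 2*k+1)" by (rule strict_monoI) simp
  moreover have "d n = 0" if "n \<notin> range (\<lambda>k::nat. 2*k+1)" for n
  proof -
    have "even n" using that by (metis odd_two_times_div_two_succ range_eqI)
    then show ?thesis by (simp add: d_def)
  qed
  ultimately have sd: "d sums (4 * S4)" using sums_mono_reindex[of "\<lambda>k. 2*k+1" d] by blast
  have "(\<lambda>n. d n - b n) sums (4 * S4 - S2)" by (rule sums_diff[OF sd sb])
  moreover have "(\<lambda>n. d n - b n) = (\<lambda>n. real (Suc n) * (-1) ^ (Suc n) / (exp (2 * pi * real (Suc n)) - 1))"
  proof
    fix n
    have "d n - b n = (-1) ^ (Suc n) * b n" by (simp add: d_def algebra_simps)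
    also have "\<dots> = real (Suc n) * (-1) ^ (Suc n) / (exp (2 * pi * real (Suc n)) - 1)"
      unfolding b_def by (simp only: times_divide_eq_right mult.commute)
    finally show "d n - b n = real (Suc n) * (-1) ^ (Suc n) / (exp (2 * pi * real (Suc n)) - 1)" .
  qed
  ultimately show "(\<lambda>n. real (Suc n) * (-1) ^ (Suc n) / (exp (2 * pi * real (Suc n)) - 1)) sums (4 * S4 - S2)"
    by simp
qed

theorem corollary1p18:
  shows "(\<Sum>n. real (Suc n) * exp (real (Suc n) * pi) / (exp (2 * pi * real (Suc n)) - 1))
       + (\<Sum>n. real (Suc n) * (-1) ^ (Suc n) / (exp (2 * pi * real (Suc n)) - 1))
       = 1/8 - 1 / (4 * pi)"
proof -
  obtain K1 K1' where a1: "(\<lambda>r. real (Suc r) / (exp (real (Suc r) * (2*pi*1)) - 1)) sums (K1/4)"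
    and a1': "(\<lambda>r. real (Suc r) / (exp (real (Suc r) * (2*pi*(1/1))) - 1)) sums (K1'/4)"
    and r1: "K1 + K1' / 1^2 = 1/6 + 1/(6 * 1^2) - 1 / (pi * 1)"
    using lam_at[of 1] by auto
  obtain K2 K2' where a2: "(\<lambda>r. real (Suc r) / (exp (real (Suc r) * (2*pi*2)) - 1)) sums (K2/4)"
    and a2': "(\<lambda>r. real (Suc r) / (exp (real (Suc r) * (2*pi*(1/2))) - 1)) sums (K2'/4)"
    and r2: "K2 + K2' / 2^2 = 1/6 + 1/(6 * 2^2) - 1 / (pi * 2)"
    using lam_at[of 2] by auto
  have K11: "K1' = K1" using a1 a1' sums_unique2 by fastforce
  have s1: "(\<lambda>r. real (Suc r) / (exp (real (Suc r) * pi) - 1)) sums (K2'/4)" using a2' by simp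
  have s2: "(\<lambda>r. real (Suc r) / (exp (real (Suc r) * (2*pi)) - 1)) sums (K1/4)" using a1 by simp
  have s4: "(\<lambda>r. real (Suc r) / (exp (real (Suc r) * (4*pi)) - 1)) sums (K2/4)" using a2 by (simp add: mult.commute)
  note fc = final_combination[OF s1 s2 s4]
  have "(\<Sum>n. real (Suc n) * exp (real (Suc n) * pi) / (exp (2 * pi * real (Suc n)) - 1))
       + (\<Sum>n. real (Suc n) * (-1) ^ (Suc n) / (exp (2 * pi * real (Suc n)) - 1))
      = (K2'/4 - K1/4) + (4 * (K2/4) - K1/4)"
    using sums_unique[OF fc(1)] sums_unique[OF fc(2)] by simp
  also have "\<dots> = 1/8 - 1 / (4 * pi)"
    using r1 r2 K11 by (simp add: field_simps)
  finally show ?thesis .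
qed


end
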